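(* For every $n\ge 1$ and every $A$ as in the context there exists $\mathrm{Single}(n,A)\in A\cup\{\infty\}$ such that, for every positive integer $x$, the position $P_x$ of $\mathrm{AGG}(n,A)$ consisting of one tile of value $x$ and $n-1$ empty cells is reachable if and only if $x\in A$ and $x\le \mathrm{Single}(n,A)$. In particular, if $\mathrm{Single}(n,A)$ is finite it is the largest value of a single tile achievable in $\mathrm{AGG}(n,A)$, and if it is $\infty$ then every value in $A$ is achievable as a single tile.
   Context: Let $A$ be a set of positive integers with $1\in A$ (the allowed tile values). For an integer $n\ge 0$, the abstract generalized 2048 game $\mathrm{AGG}(n,A)$ is played on $n$ indistinguishable cells. A position assigns to each cell either nothing (the cell is empty) or a tile carrying a value in $A$. The initial position has all cells empty. A step, which can be performed from any position having at least one empty cell, consists of: (i) placing a new tile of value $1$ into a chosen empty cell; then (ii) optionally choosing any collection of pairwise disjoint sets of nonempty cells such that the sum of the tile values in each chosen set belongs to $A$, and merging each chosen set into a single tile, whose value is that sum, placed in one cell of the set, the other cells of the set becoming empty. The game ends when, after a step, all cells are nonempty (no further step is then possible). A position is reachable if it can be obtained from the initial position by a finite sequence of steps. *)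

theory Defs
  imports Main "HOL-Library.Multiset" "HOL-Library.Extended_Nat"
begin

text \<open>Since cells are indistinguishable, a position of AGG(n,A) is represented by the
multiset of tile values on the nonempty cells; the number of empty cells is
n minus the size of this multiset.\<close>

definition agg_step :: "nat \<Rightarrow> nat set \<Rightarrow> nat multiset \<Rightarrow> nat multiset \<Rightarrow> bool" where
  "agg_step n A M M' \<longleftrightarrow>
     size M < n \<and>
     (\<exists>R Ss. M + {#1#} = R + sum_list Ss \<and>
             (\<forall>S\<in>set Ss. S \<noteq> {#} \<and> sum_mset S \<in> A) \<and>
             M' = R + mset (map sum_mset Ss))"

definition agg_reachable :: "nat \<Rightarrow> nat set \<Rightarrow> nat multiset \<Rightarrow> bool" where
  "agg_reachable n A M \<longleftrightarrow> (agg_step n A)\<^sup>*\<^sup>* {#} M"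

end

theory Submission
  imports Defs
begin

lemma my_sml: "sum_mset (sum_list Ss) = sum_list (map sum_mset Ss)"
  by (induction Ss) auto

lemma step_sum:
  assumes "agg_step n A M M'"
  shows "sum_mset M' = sum_mset M + 1 \<and> size M < n"
proof -
  from assms obtain R Ss where h: "M + {#1#} = R + sum_list Ss" "M' = R + mset (map sum_mset Ss)"
    and "size M < n" unfolding agg_step_def by blast
  have "sum_mset (M + {#1#}) = sum_mset R + sum_mset (sum_list Ss)" using h(1) by simp
  moreover have "sum_mset M' = sum_mset R + sum_list (map sum_mset Ss)"
    using h(2) by (simp add: my_sml flip: sum_mset_sum_list)
  moreover have "sum_mset (M + {#1#}) = sum_mset M + 1" by simp
  ultimately show ?thesis using \<open>size M < n\<close> my_sml[of Ss] by linarith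
qed

lemma step_A:
  assumes "agg_step n A M M'" "\<forall>a\<in>#M. a \<in> A" "1 \<in> A"
  shows "\<forall>a\<in>#M'. a \<in> A"
proof -
  from assms(1) obtain R Ss where h: "M + {#1#} = R + sum_list Ss"
    "\<forall>S\<in>set Ss. S \<noteq> {#} \<and> sum_mset S \<in> A" "M' = R + mset (map sum_mset Ss)"
    unfolding agg_step_def by blast
  have "\<forall>a\<in>#R. a \<in> A"
  proof
    fix a assume "a \<in># R"
    then have "a \<in># M + {#1#}" using h(1) by simp
    then show "a \<in> A" using assms(2,3) by auto
  qed
  then show ?thesis using h(2,3) by auto
qed

lemma reach_inv:
  assumes "(agg_step n A)\<^sup>*\<^sup>* {#} M" "1 \<in> A"
  shows "(\<forall>a\<in>#M. a \<in> A) \<and>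
    (\<forall>k. 0 < k \<and> k \<le> sum_mset M \<longrightarrow>
       (\<exists>M'. (agg_step n A)\<^sup>*\<^sup>* {#} M' \<and> sum_mset M' = k - 1 \<and> size M' < n))"
  using assms(1)
proof (induction rule: rtranclp_induct)
  case base
  then show ?case by simp
next
  case (step y z)
  have s: "sum_mset z = sum_mset y + 1 \<and> size y < n" using step_sum[OF step(2)] .
  have A: "\<forall>a\<in>#z. a \<in> A" using step_A[OF step(2)] step(3) assms(2) by blast
  show ?case
  proof (intro conjI A allI impI)
    fix k assume k: "0 < k \<and> k \<le> sum_mset z"
    show "\<exists>M'. (agg_step n A)\<^sup>*\<^sup>* {#} M' \<and> sum_mset M' = k - 1 \<and> size M' < n"
    proof (cases "k \<le> sum_mset y")
      case True then show ?thesis using step(3) k by blast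
    next
      case False
      then have "k = sum_mset y + 1" using k s by simp
      then show ?thesis using step(1) s by auto
    qed
  qed
qed

lemma single_step:
  assumes "size M < n" "sum_mset M + 1 \<in> A"
  shows "agg_step n A M {#sum_mset M + 1#}"
  unfolding agg_step_def
  apply (rule conjI, fact)
  apply (rule exI[of _ "{#}"], rule exI[of _ "[M + {#1#}]"])
  using assms by simp

lemma reach_A:
  assumes "agg_reachable n A {#x#}" "1 \<in> A"
  shows "x \<in> A"
  using reach_inv[OF assms(1)[unfolded agg_reachable_def] assms(2)] by simp

lemma down:
  assumes "agg_reachable n A {#x#}" "1 \<in> A" "y \<in> A" "0 < y" "y \<le> x"
  shows "agg_reachable n A {#y#}"
proof -
  obtain M' where M': "(agg_step n A)\<^sup>*\<^sup>* {#} M'" "sum_mset M' = y - 1" "size M' < n"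
    using reach_inv[OF assms(1)[unfolded agg_reachable_def] assms(2)] assms(4,5) by auto
  have "sum_mset M' + 1 = y" using M'(2) assms(4) by simp
  then have "agg_step n A M' {#y#}" using single_step[OF M'(3)] assms(3) by metis
  then show ?thesis using M'(1) unfolding agg_reachable_def by auto
qed

theorem mainTheorem4:
  fixes n :: nat and A :: "nat set"
  assumes "n \<ge> 1" and "1 \<in> A" and "\<forall>a\<in>A. a > 0"
  shows "\<exists>s :: enat. (s = \<infinity> \<or> (\<exists>a\<in>A. s = enat a)) \<and>
           (\<forall>x::nat. x > 0 \<longrightarrow>
              (agg_reachable n A {#x#} \<longleftrightarrow> x \<in> A \<and> enat x \<le> s))"
proof -
  define S where "S = {x. agg_reachable n A {#x#}}"
  have one: "1 \<in> S"
  proof -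
    have "agg_step n A {#} {#1#}" using single_step[of "{#}" n A] assms by simp
    then show ?thesis unfolding S_def agg_reachable_def by auto
  qed
  show ?thesis
  proof (cases "finite S")
    case True
    have mS: "Max S \<in> S" using True one Max_in by blast
    show ?thesis
    proof (intro exI[of _ "enat (Max S)"] conjI allI impI)
      show "enat (Max S) = \<infinity> \<or> (\<exists>a\<in>A. enat (Max S) = enat a)"
        using reach_A mS assms(2) unfolding S_def by blast
      fix x :: nat assume "x > 0"
      show "agg_reachable n A {#x#} = (x \<in> A \<and> enat x \<le> enat (Max S))"
      proof
        assume "agg_reachable n A {#x#}"
        then show "x \<in> A \<and> enat x \<le> enat (Max S)"
          using reach_A assms(2) True unfolding S_def by auto
      next
        assume "x \<in> A \<and> enat x \<le> enat (Max S)"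
        then show "agg_reachable n A {#x#}"
          using down[of n A "Max S" x] mS assms(2) \<open>x > 0\<close> unfolding S_def by auto
      qed
    qed
  next
    case False
    show ?thesis
    proof (intro exI[of _ "\<infinity>::enat"] conjI allI impI)
      show "(\<infinity>::enat) = \<infinity> \<or> (\<exists>a\<in>A. \<infinity> = enat a)" by simp
      fix x :: nat assume "x > 0"
      show "agg_reachable n A {#x#} = (x \<in> A \<and> enat x \<le> \<infinity>)"
      proof
        assume "agg_reachable n A {#x#}"
        then show "x \<in> A \<and> enat x \<le> \<infinity>" using reach_A assms(2) by auto
      next
        assume "x \<in> A \<and> enat x \<le> \<infinity>"
        moreover obtain z where "z \<in> S" "x \<le> z"
          using False unfolding infinite_nat_iff_unbounded_le by blast
        ultimately show "agg_reachable n A {#x#}"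
          using down[of n A z x] assms(2) \<open>x > 0\<close> unfolding S_def by auto
      qed
    qed
  qed
qed

end
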